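(* There exist a finite-horizon MDP $M^\star$ with stochastic transitions and a data-collection policy $\pi_{\mathcal{D}}$ such that: (1) there is a model $M \neq M^\star$ whose expected multi-step reward-prediction loss (i.e., the loss in the limit of infinitely many data trajectories) is strictly smaller than that of the true model $M^\star$; and (2) this model $M$ gives a wrong evaluation to some policy $\pi$, i.e., $J_M(\pi) \neq J_{M^\star}(\pi)$.
   Context: A finite-horizon MDP with horizon $H$ has a state space $\mathcal{S}$, an action space $\mathcal{A}$, a fixed initial state $s_1$, transition kernel $P^\star:\mathcal{S}\times\mathcal{A}\to\Delta(\mathcal{S})$ and reward function $R^\star:\mathcal{S}\times\mathcal{A}\to[0,R_{\max}]$. For a model $M=(P,R)$ (a transition kernel and reward function on the same $\mathcal{S},\mathcal{A}$) and a policy $\pi$, $J_M(\pi)=\mathbb{E}_{M,\pi}[\sum_{h=1}^H r_h]$ denotes the expected return of $\pi$ when trajectories are generated by $M$; the true model is $M^\star=(P^\star,R^\star)$. Data consists of i.i.d. trajectories $(s_1,a_1,r_1,\ldots,s_H,a_H,r_H)$ generated by running a behavior policy $\pi_{\mathcal{D}}$ in $M^\star$, with $r_h=R^\star(s_h,a_h)$. The multi-step reward-prediction loss of a model $M=(P,R)$ on one trajectory is defined as follows: for each $h\in\{1,\ldots,H\}$, set $\hat s_h=s_h$ and for $h'=h,\ldots,H$ let $\hat r_{h'}=R(\hat s_{h'},a_{h'})$ and sample $\hat s_{h'+1}\sim P(\cdot\mid \hat s_{h'},a_{h'})$ (reusing the data actions $a_{h'}$); the loss is $\sum_{h=1}^H\sum_{h'=h}^H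 (r_{h'}-\hat r_{h'})^2$. The empirical loss averages this over data trajectories; the expected loss takes expectation over the data trajectory (drawn from $\pi_{\mathcal{D}}$ in $M^\star$) and over the model's sampling. *)

theory Defs
  imports "HOL-Probability.Probability"
begin

text \<open>A (Markov, possibly stochastic, time-dependent) policy is pol :: nat => 's => 'a pmf,
  indexed by the time step h (starting at 1).
  A trajectory is the list [(s_1,a_1),...,(s_H,a_H)]; the reward r_h = R(s_h,a_h) is
  a deterministic function of it.\<close>

fun traj :: "('s \<Rightarrow> 'a \<Rightarrow> 's pmf) \<Rightarrow> (nat \<Rightarrow> 's \<Rightarrow> 'a pmf) \<Rightarrow> nat \<Rightarrow> 's \<Rightarrow> nat
              \<Rightarrow> ('s \<times> 'a) list pmf" where
  "traj P pol h s 0 = return_pmf []"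
| "traj P pol h s (Suc n) =
     do { a \<leftarrow> pol h s; s' \<leftarrow> P s a; rest \<leftarrow> traj P pol (Suc h) s' n; return_pmf ((s, a) # rest) }"

definition traj_dist :: "('s \<Rightarrow> 'a \<Rightarrow> 's pmf) \<Rightarrow> (nat \<Rightarrow> 's \<Rightarrow> 'a pmf) \<Rightarrow> 's \<Rightarrow> nat
                          \<Rightarrow> ('s \<times> 'a) list pmf" where
  "traj_dist P pol s1 H = traj P pol 1 s1 H"

definition J :: "('s \<Rightarrow> 'a \<Rightarrow> 's pmf) \<Rightarrow> ('s \<Rightarrow> 'a \<Rightarrow> real) \<Rightarrow> (nat \<Rightarrow> 's \<Rightarrow> 'a pmf) \<Rightarrow> 's \<Rightarrow> nat \<Rightarrow> real" where
  "J P R pol s1 H =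
     measure_pmf.expectation (traj_dist P pol s1 H) (\<lambda>\<tau>. \<Sum>(s, a)\<leftarrow>\<tau>. R s a)"

fun rollout :: "('s \<Rightarrow> 'a \<Rightarrow> 's pmf) \<Rightarrow> ('s \<Rightarrow> 'a \<Rightarrow> real) \<Rightarrow> 's \<Rightarrow> 'a list \<Rightarrow> real list pmf" where
  "rollout P R s [] = return_pmf []"
| "rollout P R s (a # as) =
     do { s' \<leftarrow> P s a; rest \<leftarrow> rollout P R s' as; return_pmf (R s a # rest) }"

definition traj_loss :: "('s \<Rightarrow> 'a \<Rightarrow> real) \<Rightarrow> ('s \<Rightarrow> 'a \<Rightarrow> 's pmf) \<Rightarrow> ('s \<Rightarrow> 'a \<Rightarrow> real)
                          \<Rightarrow> ('s \<times> 'a) list \<Rightarrow> real" where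
  "traj_loss Rstar P R \<tau> =
     (\<Sum>h<length \<tau>.
        measure_pmf.expectation (rollout P R (fst (\<tau> ! h)) (map snd (drop h \<tau>)))
          (\<lambda>rhat. \<Sum>(r, r')\<leftarrow>zip (map (\<lambda>(s, a). Rstar s a) (drop h \<tau>)) rhat. (r - r')\<^sup>2))"

definition expected_loss :: "('s \<Rightarrow> 'a \<Rightarrow> 's pmf) \<Rightarrow> ('s \<Rightarrow> 'a \<Rightarrow> real) \<Rightarrow> (nat \<Rightarrow> 's \<Rightarrow> 'a pmf) \<Rightarrow> 's \<Rightarrow> nat
     \<Rightarrow> ('s \<Rightarrow> 'a \<Rightarrow> 's pmf) \<Rightarrow> ('s \<Rightarrow> 'a \<Rightarrow> real) \<Rightarrow> real" where
  "expected_loss Pstar Rstar polD s1 H P R =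
     measure_pmf.expectation (traj_dist Pstar polD s1 H) (traj_loss Rstar P R)"

text \<open>Stochastic transitions: on some trajectory that can occur in the data, some non-final
  step uses a state-action pair whose transition is not a point mass.\<close>
definition stochastic_on_data :: "('s \<Rightarrow> 'a \<Rightarrow> 's pmf) \<Rightarrow> (nat \<Rightarrow> 's \<Rightarrow> 'a pmf) \<Rightarrow> 's \<Rightarrow> nat \<Rightarrow> bool" where
  "stochastic_on_data P polD s1 H \<longleftrightarrow>
     (\<exists>\<tau>\<in>set_pmf (traj_dist P polD s1 H). \<exists>i. Suc i < length \<tau> \<and>
        \<not> (\<exists>s'. P (fst (\<tau> ! i)) (snd (\<tau> ! i)) = return_pmf s'))"

end

theory Submission
  imports Defs
begin

definition "Ps (s::nat) (a::nat) = (if s = 0 then pmf_of_set {1,2} else return_pmf (0::nat))"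
definition "Rs (s::nat) (a::nat) = (if s = 1 then 1 else (0::real))"
definition "Pm (s::nat) (a::nat) = (if s = 0 then return_pmf 3 else return_pmf (0::nat))"
definition "Rm (s::nat) (a::nat) = (if s = 1 then 1 else if s = 3 then 1/3 else (0::real))"
definition "pd = (\<lambda>(h::nat) (s::nat). return_pmf (0::nat))"

lemma td: "traj_dist Ps pd 0 2 = map_pmf (\<lambda>s. [(0,0),(s,0)]) (pmf_of_set {1,2})"
  by (simp add: traj_dist_def numeral_2_eq_2 Ps_def pd_def map_pmf_def bind_return_pmf bind_assoc_pmf)
lemma tdm: "traj_dist Pm pd 0 2 = return_pmf [(0,0),(3,0)]"
  by (simp add: traj_dist_def numeral_2_eq_2 Pm_def pd_def bind_return_pmf)
lemma ro1: "rollout Ps Rs 0 [0,0] = map_pmf (\<lambda>s. [0, Rs s 0]) (pmf_of_set {1,2})"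
  by (simp add: Ps_def map_pmf_def bind_return_pmf bind_assoc_pmf Rs_def)
lemma ro2: "rollout Ps Rs s [0] = return_pmf [Rs s 0]"
  by (simp add: Ps_def bind_return_pmf Rs_def)
lemma ro3: "rollout Pm Rm s [0] = return_pmf [Rm s 0]"
  by (simp add: Pm_def bind_return_pmf Rm_def)
lemma ro4: "rollout Pm Rm 0 [0,0] = return_pmf [0, 1/3]"
  by (simp add: Pm_def bind_return_pmf Rm_def)

lemma L1: "expected_loss Ps Rs pd 0 2 Ps Rs = 1/2"
  unfolding expected_loss_def td
  by (simp del: rollout.simps add: integral_pmf_of_set traj_loss_def ro1 ro2 lessThan_Suc numeral_2_eq_2, simp add: Rs_def integral_pmf_of_set power2_eq_square)
lemma L2: "expected_loss Ps Rs pd 0 2 Pm Rm = 5/18"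
  unfolding expected_loss_def td
  by (simp del: rollout.simps add: integral_pmf_of_set traj_loss_def ro3 ro4 lessThan_Suc numeral_2_eq_2, simp add: Rs_def Rm_def power2_eq_square)
lemma J1: "J Pm Rm pd 0 2 = 1/3"
  unfolding J_def tdm by (simp add: Rm_def)
lemma J2: "J Ps Rs pd 0 2 = 1/2"
  unfolding J_def td by (simp add: Rs_def integral_pmf_of_set)
lemma st: "stochastic_on_data Ps pd 0 2"
  unfolding stochastic_on_data_def td
proof (rule bexI[where x="[(0,0),(1,0)]"])
  show "\<exists>i. Suc i < length [(0::nat,0::nat),(1,0)] \<and> \<not> (\<exists>s'. Ps (fst ([(0::nat,0::nat),(1,0)] ! i)) (snd ([(0::nat,0::nat),(1,0)] ! i)) = return_pmf s')"
  proof (intro exI[of _ 0] conjI)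
    show "\<not> (\<exists>s'. Ps (fst ([(0::nat,0::nat),(1,0)] ! 0)) (snd ([(0::nat,0::nat),(1,0)] ! 0)) = return_pmf s')"
    proof
      assume "\<exists>s'. Ps (fst ([(0::nat,0::nat),(1,0)] ! 0)) (snd ([(0::nat,0::nat),(1,0)] ! 0)) = return_pmf s'"
      then obtain s' where "pmf_of_set {1::nat,2} = return_pmf s'" by (auto simp: Ps_def)
      then have "set_pmf (pmf_of_set {1::nat,2}) = {s'}" by simp
      then have "{1::nat,2} = {s'}" by simp
      then have "(1::nat) = s'" "(2::nat) = s'" by (auto dest: equalityD1)
      then show False by simp
    qed
  qed simp
qed simp


theorem proposition1:
  shows "\<exists>(H::nat) (Rmax::real) (s1::nat) (Pstar::nat \<Rightarrow> nat \<Rightarrow> nat pmf) (Rstar::nat \<Rightarrow> nat \<Rightarrow> real)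
            (polD::nat \<Rightarrow> nat \<Rightarrow> nat pmf) (P::nat \<Rightarrow> nat \<Rightarrow> nat pmf) (R::nat \<Rightarrow> nat \<Rightarrow> real)
            (pol::nat \<Rightarrow> nat \<Rightarrow> nat pmf).
     1 \<le> H \<and> 0 < Rmax \<and>
     (\<forall>s a. 0 \<le> Rstar s a \<and> Rstar s a \<le> Rmax) \<and>
     (\<forall>s a. 0 \<le> R s a \<and> R s a \<le> Rmax) \<and>
     stochastic_on_data Pstar polD s1 H \<and>
     (P, R) \<noteq> (Pstar, Rstar) \<and>
     expected_loss Pstar Rstar polD s1 H P R < expected_loss Pstar Rstar polD s1 H Pstar Rstar \<and>
     J P R pol s1 H \<noteq> J Pstar Rstar pol s1 H"
  proof -
  have "(\<forall>s a. 0 \<le> Rs s a \<and> Rs s a \<le> 1)" by (simp add: Rs_def)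
  moreover have "(\<forall>s a. 0 \<le> Rm s a \<and> Rm s a \<le> 1)" by (simp add: Rm_def)
  moreover have "(Pm, Rm) \<noteq> (Ps, Rs)"
  proof
    assume "(Pm, Rm) = (Ps, Rs)"
    then have "Rm 3 0 = Rs 3 0" by simp
    then show False by (simp add: Rm_def Rs_def)
  qed
  ultimately show ?thesis
    by (intro exI[of _ 2] exI[of _ 1] exI[of _ 0] exI[of _ Ps] exI[of _ Rs] exI[of _ pd] exI[of _ Pm] exI[of _ Rm] exI[of _ pd])
       (simp add: L1 L2 J1 J2 st)
qed

end
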